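(* Let $r$ be a normalized formal generalized $r$-matrix. Then, with respect to the bilinear form $\kappa_0$ on $\mathfrak g(\!(z)\!)$, one has $\mathfrak g(r)^\perp=\mathfrak g(\bar r)$. Moreover, $r$ is skew-symmetric if and only if $\mathfrak g(r)^\perp=\mathfrak g(r)$.
   Context: $\Bbbk$ is a field of characteristic $0$, $\mathfrak g$ a finite-dimensional semisimple Lie algebra over $\Bbbk$ with Killing form $\kappa$, $\kappa$-orthonormal basis $\{b_i\}_{i=1}^d$ and Casimir $\gamma=\sum_ib_i\otimes b_i$; $\frac1{x-y}=\sum_{k\ge0}x^{-k-1}y^k$. A series $r\in(\mathfrak g\otimes\mathfrak g)(\!(x)\!)[\![y]\!]$ is in normalized standard form if $r=\frac{\gamma}{x-y}+r_0$, $r_0\in(\mathfrak g\otimes\mathfrak g)[\![x,y]\!]$; $\bar r(x,y)=\frac{\gamma}{x-y}-\tau(r_0(y,x))$ ($\tau$ the flip); skew-symmetric means $\bar r=r$. With $s^{ij}$ meaning substitution $(x,y)=(x_i,x_j)$ and placement in tensor positions $i,j$ in $(U(\mathfrak g)^{\otimes3})\otimes\Bbbk(\!(x_1)\!)(\!(x_2)\!)[\![x_3]\!]$, a normalized formal generalized $r$-matrix is such $r$ with $[r^{12},r^{13}]+[r^{12},r^{23}]+[r^{13},\bar r^{23}]=0$. For $s=\sum_{k,i}s_{k,i}(x)\otimes b_iy^k$, $\mathfrak g(s)=\mathrm{span}_\Bbbk\{s_{k,i}(z)\}$. The form $\kappa_0$ on $\mathfrak g(\!(z)\!)$ is $\kappa_0(s,t)=\mathrm{res}_0\kappa(s,t)\,dz=\sum_{k+\ell=-1}\kappa(s_k,t_\ell)$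 for $s=\sum s_kz^k$, $t=\sum t_kz^k$, and $\perp$ denotes orthogonal complement with respect to $\kappa_0$. *)

theory Defs
  imports Main "HOL-Library.Groups_Big_Fun" "HOL-Library.Function_Algebras"
begin

text \<open>
  The finite-dimensional Lie algebra g over the field 'k is realised in
  coordinates as the space of functions 'n => 'k ('n a finite index type, so dim g = CARD('n)),
  with Lie bracket br.  Tensors in g (x) g and g (x) g (x) g are coordinate arrays with
  respect to the standard basis.  A series in (g(x)g)((x))[[y]] is a map
  int => nat => tensor (coefficient of x^i y^k).  Series in k((x1))((x2))[[x3]] with
  values in a tensor space are maps int => int => int => tensor, multiplied by the
  Cauchy product (finitely supported sums, Sum_any).
\<close>

type_synonym ('n,'k) vec = "'n \<Rightarrow> 'k"
type_synonym ('n,'k) tens2 = "'n \<Rightarrow> 'n \<Rightarrow> 'k"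
type_synonym ('n,'k) tens3 = "'n \<Rightarrow> 'n \<Rightarrow> 'n \<Rightarrow> 'k"

definition vscale :: "'k::field \<Rightarrow> ('n,'k) vec \<Rightarrow> ('n,'k) vec" where
  "vscale c v = (\<lambda>p. c * v p)"

definition ei :: "'n \<Rightarrow> ('n,'k::field) vec" where
  "ei q = (\<lambda>p. if p = q then 1 else 0)"

definition lin_span :: "('k \<Rightarrow> 'v \<Rightarrow> 'v) \<Rightarrow> 'v::comm_monoid_add set \<Rightarrow> 'v set" where
  "lin_span sc S = {v. \<exists>t c. finite t \<and> t \<subseteq> S \<and> v = (\<Sum>a\<in>t. sc (c a) a)}"

definition lie_algebra :: "(('n,'k::field) vec \<Rightarrow> ('n,'k) vec \<Rightarrow> ('n,'k) vec) \<Rightarrow> bool" where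
  "lie_algebra br \<longleftrightarrow>
     (\<forall>x y z. br (x + y) z = br x z + br y z) \<and>
     (\<forall>x y z. br x (y + z) = br x y + br x z) \<and>
     (\<forall>c x y. br (vscale c x) y = vscale c (br x y)) \<and>
     (\<forall>c x y. br x (vscale c y) = vscale c (br x y)) \<and>
     (\<forall>x. br x x = 0) \<and>
     (\<forall>x y z. br x (br y z) + br y (br z x) + br z (br x y) = 0)"

definition killing :: "(('n::finite,'k::field) vec \<Rightarrow> ('n,'k) vec \<Rightarrow> ('n,'k) vec)
    \<Rightarrow> ('n,'k) vec \<Rightarrow> ('n,'k) vec \<Rightarrow> 'k" where
  "killing br a b = (\<Sum>q\<in>UNIV. br a (br b (ei q)) q)"

definition lie_subspace :: "('n,'k::field) vec set \<Rightarrow> bool" where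
  "lie_subspace I \<longleftrightarrow> 0 \<in> I \<and> (\<forall>x\<in>I. \<forall>y\<in>I. x + y \<in> I) \<and> (\<forall>c. \<forall>x\<in>I. vscale c x \<in> I)"

definition lie_ideal :: "(('n,'k::field) vec \<Rightarrow> ('n,'k) vec \<Rightarrow> ('n,'k) vec) \<Rightarrow> ('n,'k) vec set \<Rightarrow> bool" where
  "lie_ideal br I \<longleftrightarrow> lie_subspace I \<and> (\<forall>x. \<forall>y\<in>I. br x y \<in> I)"

fun derived_series :: "(('n,'k::field) vec \<Rightarrow> ('n,'k) vec \<Rightarrow> ('n,'k) vec) \<Rightarrow> ('n,'k) vec set \<Rightarrow> nat \<Rightarrow> ('n,'k) vec set" where
  "derived_series br I 0 = I"
| "derived_series br I (Suc m) =
     lin_span vscale {br x y | x y. x \<in> derived_series br I m \<and> y \<in> derived_series br I m}"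

definition solvable_subalg :: "(('n,'k::field) vec \<Rightarrow> ('n,'k) vec \<Rightarrow> ('n,'k) vec) \<Rightarrow> ('n,'k) vec set \<Rightarrow> bool" where
  "solvable_subalg br I \<longleftrightarrow> (\<exists>m. derived_series br I m = {0})"

definition semisimple :: "(('n,'k::field) vec \<Rightarrow> ('n,'k) vec \<Rightarrow> ('n,'k) vec) \<Rightarrow> bool" where
  "semisimple br \<longleftrightarrow> (\<forall>I. lie_ideal br I \<and> solvable_subalg br I \<longrightarrow> I = {0})"

definition killing_orthonormal :: "(('n::finite,'k::field) vec \<Rightarrow> ('n,'k) vec \<Rightarrow> ('n,'k) vec) \<Rightarrow> ('n \<Rightarrow> ('n,'k) vec) \<Rightarrow> bool" where
  "killing_orthonormal br b \<longleftrightarrow> (\<forall>i j. killing br (b i) (b j) = (if i = j then 1 else 0))"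

definition casimir :: "('n::finite \<Rightarrow> ('n,'k::field) vec) \<Rightarrow> ('n,'k) tens2" where
  "casimir b = (\<lambda>p q. \<Sum>i\<in>UNIV. b i p * b i q)"

definition flip2 :: "('n,'k) tens2 \<Rightarrow> ('n,'k) tens2" where
  "flip2 T = (\<lambda>p q. T q p)"

text \<open>gamma/(x-y) = sum_{k>=0} gamma x^(-k-1) y^k, as an element of (g(x)g)((x))[[y]].\<close>
definition cauchy_kernel :: "('n,'k::field) tens2 \<Rightarrow> int \<Rightarrow> nat \<Rightarrow> ('n,'k) tens2" where
  "cauchy_kernel \<gamma> i k = (if i = - int k - 1 then \<gamma> else 0)"

text \<open>Normalized standard form: r = gamma/(x-y) + r0 with r0 in (g(x)g)[[x,y]], i.e. r agrees
  with gamma/(x-y) at all negative powers of x.\<close>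
definition normalized_standard_form ::
    "('n::finite \<Rightarrow> ('n,'k::field) vec) \<Rightarrow> (int \<Rightarrow> nat \<Rightarrow> ('n,'k) tens2) \<Rightarrow> bool" where
  "normalized_standard_form b r \<longleftrightarrow> (\<forall>i k. i < 0 \<longrightarrow> r i k = cauchy_kernel (casimir b) i k)"

definition regular_part :: "('n::finite \<Rightarrow> ('n,'k::field) vec) \<Rightarrow> (int \<Rightarrow> nat \<Rightarrow> ('n,'k) tens2) \<Rightarrow> nat \<Rightarrow> nat \<Rightarrow> ('n,'k) tens2" where
  "regular_part b r i k = r (int i) k - cauchy_kernel (casimir b) (int i) k"

text \<open>rbar(x,y) = gamma/(x-y) - tau(r0(y,x)).\<close>
definition rbar :: "('n::finite \<Rightarrow> ('n,'k::field) vec) \<Rightarrow> (int \<Rightarrow> nat \<Rightarrow> ('n,'k) tens2) \<Rightarrow> int \<Rightarrow> nat \<Rightarrow> ('n,'k) tens2" where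
  "rbar b r i k = cauchy_kernel (casimir b) i k
      - (if 0 \<le> i then flip2 (regular_part b r k (nat i)) else 0)"

definition skew_symmetric :: "('n::finite \<Rightarrow> ('n,'k::field) vec) \<Rightarrow> (int \<Rightarrow> nat \<Rightarrow> ('n,'k) tens2) \<Rightarrow> bool" where
  "skew_symmetric b r \<longleftrightarrow> rbar b r = r"

text \<open>Placement of a two-variable series s(x,y) as s^{ij} = s(x_i,x_j) in k((x1))((x2))[[x3]].\<close>
definition emb12 :: "(int \<Rightarrow> nat \<Rightarrow> 'a::zero) \<Rightarrow> int \<Rightarrow> int \<Rightarrow> int \<Rightarrow> 'a" where
  "emb12 s a b c = (if 0 \<le> b \<and> c = 0 then s a (nat b) else 0)"
definition emb13 :: "(int \<Rightarrow> nat \<Rightarrow> 'a::zero) \<Rightarrow> int \<Rightarrow> int \<Rightarrow> int \<Rightarrow> 'a" where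
  "emb13 s a b c = (if b = 0 \<and> 0 \<le> c then s a (nat c) else 0)"
definition emb23 :: "(int \<Rightarrow> nat \<Rightarrow> 'a::zero) \<Rightarrow> int \<Rightarrow> int \<Rightarrow> int \<Rightarrow> 'a" where
  "emb23 s a b c = (if a = 0 \<and> 0 \<le> c then s b (nat c) else 0)"

definition conv3 :: "('a \<Rightarrow> 'b \<Rightarrow> 'c::comm_monoid_add) \<Rightarrow> (int \<Rightarrow> int \<Rightarrow> int \<Rightarrow> 'a) \<Rightarrow> (int \<Rightarrow> int \<Rightarrow> int \<Rightarrow> 'b)
     \<Rightarrow> int \<Rightarrow> int \<Rightarrow> int \<Rightarrow> 'c" where
  "conv3 op S T a b c =
     Sum_any (\<lambda>(a1, b1, c1). op (S a1 b1 c1) (T (a - a1) (b - b1) (c - c1)))"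

text \<open>Commutators in U(g)^(x)3 of the placed tensors; they lie in g(x)g(x)g:
  [A^{12},B^{13}] = sum [a,c](x)b(x)d, [A^{12},B^{23}] = sum a(x)[b,c](x)d,
  [A^{13},B^{23}] = sum a(x)c(x)[b,d]  for A = sum a(x)b, B = sum c(x)d.\<close>
definition comm_12_13 :: "(('n::finite,'k::field) vec \<Rightarrow> ('n,'k) vec \<Rightarrow> ('n,'k) vec) \<Rightarrow> ('n,'k) tens2 \<Rightarrow> ('n,'k) tens2 \<Rightarrow> ('n,'k) tens3" where
  "comm_12_13 br A B = (\<lambda>u q t. \<Sum>p\<in>UNIV. \<Sum>s\<in>UNIV. A p q * B s t * br (ei p) (ei s) u)"
definition comm_12_23 :: "(('n::finite,'k::field) vec \<Rightarrow> ('n,'k) vec \<Rightarrow> ('n,'k) vec) \<Rightarrow> ('n,'k) tens2 \<Rightarrow> ('n,'k) tens2 \<Rightarrow> ('n,'k) tens3" where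
  "comm_12_23 br A B = (\<lambda>p v t. \<Sum>q\<in>UNIV. \<Sum>s\<in>UNIV. A p q * B s t * br (ei q) (ei s) v)"
definition comm_13_23 :: "(('n::finite,'k::field) vec \<Rightarrow> ('n,'k) vec \<Rightarrow> ('n,'k) vec) \<Rightarrow> ('n,'k) tens2 \<Rightarrow> ('n,'k) tens2 \<Rightarrow> ('n,'k) tens3" where
  "comm_13_23 br A B = (\<lambda>p s w. \<Sum>q\<in>UNIV. \<Sum>t\<in>UNIV. A p q * B s t * br (ei q) (ei t) w)"

text \<open>[r^12, r^13] + [r^12, r^23] + [r^13, rbar^23] = 0.\<close>
definition generalized_cybe ::
    "(('n::finite,'k::field) vec \<Rightarrow> ('n,'k) vec \<Rightarrow> ('n,'k) vec) \<Rightarrow> ('n \<Rightarrow> ('n,'k) vec)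
      \<Rightarrow> (int \<Rightarrow> nat \<Rightarrow> ('n,'k) tens2) \<Rightarrow> bool" where
  "generalized_cybe br b r \<longleftrightarrow>
     (\<forall>a1 a2 a3.
        conv3 (comm_12_13 br) (emb12 r) (emb13 r) a1 a2 a3
      + conv3 (comm_12_23 br) (emb12 r) (emb23 r) a1 a2 a3
      + conv3 (comm_13_23 br) (emb13 r) (emb23 (rbar b r)) a1 a2 a3 = 0)"

definition normalized_formal_gen_r_matrix ::
    "(('n::finite,'k::field) vec \<Rightarrow> ('n,'k) vec \<Rightarrow> ('n,'k) vec) \<Rightarrow> ('n \<Rightarrow> ('n,'k) vec)
      \<Rightarrow> (int \<Rightarrow> nat \<Rightarrow> ('n,'k) tens2) \<Rightarrow> bool" where
  "normalized_formal_gen_r_matrix br b r \<longleftrightarrow> normalized_standard_form b r \<and> generalized_cybe br b r"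

text \<open>g((z)): Laurent series int => g with support bounded below.\<close>
definition laurent :: "(int \<Rightarrow> ('n,'k::zero) vec) set" where
  "laurent = {s. \<exists>N. \<forall>j<N. s j = 0}"

definition sscale :: "'k::field \<Rightarrow> (int \<Rightarrow> ('n,'k) vec) \<Rightarrow> (int \<Rightarrow> ('n,'k) vec)" where
  "sscale c s = (\<lambda>j p. c * s j p)"

text \<open>Writing s = sum_{k,i} s_{k,i}(x) (x) b_i y^k, the component s_{k,i}(x) in g((x));
  since b is kappa-orthonormal it is obtained by contracting the second tensor factor
  with kappa(-, b_i).\<close>
definition component :: "(('n::finite,'k::field) vec \<Rightarrow> ('n,'k) vec \<Rightarrow> ('n,'k) vec) \<Rightarrow> ('n \<Rightarrow> ('n,'k) vec)
      \<Rightarrow> (int \<Rightarrow> nat \<Rightarrow> ('n,'k) tens2) \<Rightarrow> nat \<Rightarrow> 'n \<Rightarrow> int \<Rightarrow> ('n,'k) vec" where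
  "component br b s k i = (\<lambda>j p. \<Sum>q\<in>UNIV. s j k p q * killing br (ei q) (b i))"

definition g_of :: "(('n::finite,'k::field) vec \<Rightarrow> ('n,'k) vec \<Rightarrow> ('n,'k) vec) \<Rightarrow> ('n \<Rightarrow> ('n,'k) vec)
      \<Rightarrow> (int \<Rightarrow> nat \<Rightarrow> ('n,'k) tens2) \<Rightarrow> (int \<Rightarrow> ('n,'k) vec) set" where
  "g_of br b s = lin_span sscale {component br b s k i | k i. True}"

text \<open>kappa_0(s,t) = res_0 kappa(s,t) dz = sum_{k+l=-1} kappa(s_k,t_l).\<close>
definition kappa0 :: "(('n::finite,'k::field) vec \<Rightarrow> ('n,'k) vec \<Rightarrow> ('n,'k) vec)
      \<Rightarrow> (int \<Rightarrow> ('n,'k) vec) \<Rightarrow> (int \<Rightarrow> ('n,'k) vec) \<Rightarrow> 'k" where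
  "kappa0 br s t = Sum_any (\<lambda>m. killing br (s m) (t (- 1 - m)))"

definition kappa0_orth :: "(('n::finite,'k::field) vec \<Rightarrow> ('n,'k) vec \<Rightarrow> ('n,'k) vec)
      \<Rightarrow> (int \<Rightarrow> ('n,'k) vec) set \<Rightarrow> (int \<Rightarrow> ('n,'k) vec) set" where
  "kappa0_orth br W = {t \<in> laurent. \<forall>s\<in>W. kappa0 br s t = 0}"

end

theory Submission
  imports Defs "HOL.Vector_Spaces"
begin


lemma sum_fun_apply: "(\<Sum>a\<in>A. f a) x = (\<Sum>a\<in>A. f a x)"
  by (induction A rule: infinite_finite_induct) auto

declare plus_fun_apply[simp del] zero_fun_apply[simp del]

lemma vscale_apply: "vscale c v p = c * v p" by (simp add: vscale_def)
lemma ei_apply: "ei q p = (if p = q then 1 else 0)" by (simp add: ei_def)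

lemma vec_decomp: "(v::'n::finite \<Rightarrow> 'k::field) = (\<Sum>q\<in>UNIV. vscale (v q) (ei q))"
  by (rule ext) (simp add: sum_fun_apply vscale_apply ei_apply if_distrib zero_fun_apply cong: if_cong)

context
  fixes br :: "('n::finite \<Rightarrow> 'k::field) \<Rightarrow> ('n \<Rightarrow> 'k) \<Rightarrow> ('n \<Rightarrow> 'k)"
  assumes LA: "lie_algebra br"
begin

lemma br_addL: "br (x + y) z = br x z + br y z" using LA by (simp add: lie_algebra_def)
lemma br_addR: "br x (y + z) = br x y + br x z" using LA by (simp add: lie_algebra_def)
lemma br_scL: "br (vscale c x) y = vscale c (br x y)" using LA by (simp add: lie_algebra_def)
lemma br_scR: "br x (vscale c y) = vscale c (br x y)" using LA by (simp add: lie_algebra_def)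
lemma br_0L: "br 0 z = 0" using br_addL[of 0 0 z] by (metis add_0 add_cancel_right_right)
lemma br_0R: "br z 0 = 0" using br_addR[of z 0 0] by (metis add_0 add_cancel_right_right)

lemma killing_addL: "killing br (x + y) z = killing br x z + killing br y z"
  by (simp add: killing_def br_addL sum.distrib plus_fun_apply)
lemma killing_addR: "killing br z (x + y) = killing br z x + killing br z y"
  by (simp add: killing_def br_addL br_addR sum.distrib plus_fun_apply)
lemma killing_scL: "killing br (vscale c x) z = c * killing br x z"
  by (simp add: killing_def br_scL br_scR vscale_apply sum_distrib_left)
lemma killing_scR: "killing br z (vscale c x) = c * killing br z x"
  by (simp add: killing_def br_scL br_scR vscale_apply sum_distrib_left)
lemma killing_0L: "killing br 0 z = 0" using killing_addL[of 0 0 z] by (metis add_0 add_cancel_right_right)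
lemma killing_0R: "killing br z 0 = 0" using killing_addR[of z 0 0] by (metis add_0 add_cancel_right_right)

lemma killing_sumL: "killing br (\<Sum>a\<in>A. vscale (c a) (f a)) z = (\<Sum>a\<in>A. c a * killing br (f a) z)"
  by (induction A rule: infinite_finite_induct) (simp_all add: killing_0L killing_addL killing_scL)
lemma killing_sumR: "killing br z (\<Sum>a\<in>A. vscale (c a) (f a)) = (\<Sum>a\<in>A. c a * killing br z (f a))"
  by (induction A rule: infinite_finite_induct) (simp_all add: killing_0R killing_addR killing_scR)

lemma killing_coordL: "killing br v w = (\<Sum>x\<in>UNIV. v x * killing br (ei x) w)"
  by (subst vec_decomp[of v]) (rule killing_sumL)
lemma killing_coordR: "killing br w v = (\<Sum>x\<in>UNIV. v x * killing br w (ei x))"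
  by (subst vec_decomp[of v]) (rule killing_sumR)

lemma br_sumR: "br x (\<Sum>a\<in>A. vscale (c a) (f a)) = (\<Sum>a\<in>A. vscale (c a) (br x (f a)))"
  by (induction A rule: infinite_finite_induct) (simp_all add: br_0R br_addR br_scR)

lemma killing_ei: "killing br (ei x) (ei a) = (\<Sum>u\<in>UNIV. \<Sum>y\<in>UNIV. br (ei a) (ei u) y * br (ei x) (ei y) u)"
proof -
  have "killing br (ei x) (ei a) = (\<Sum>u\<in>UNIV. br (ei x) (br (ei a) (ei u)) u)"
    by (simp add: killing_def)
  also have "\<dots> = (\<Sum>u\<in>UNIV. (\<Sum>y\<in>UNIV. vscale (br (ei a) (ei u) y) (br (ei x) (ei y))) u)"
    by (subst vec_decomp[of "br (ei a) (ei u)" for u]) (simp add: br_sumR)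
  finally show ?thesis by (simp add: sum_fun_apply vscale_apply)
qed

lemma killing_ei_sym: "killing br (ei x) (ei a) = killing br (ei a) (ei x)"
  unfolding killing_ei by (subst sum.swap) (simp add: mult.commute)

lemma killing_bil: "killing br v w = (\<Sum>x\<in>UNIV. \<Sum>a\<in>UNIV. v x * w a * killing br (ei x) (ei a))"
  apply (subst killing_coordL)
  apply (subst killing_coordR)
  apply (simp add: sum_distrib_left ac_simps)
  done

lemma killing_sym: "killing br v w = killing br w v"
  apply (subst killing_bil, subst (2) killing_bil)
  apply (subst (2) sum.swap)
  apply (simp add: killing_ei_sym ac_simps)
  done

end


lemma ON_eq: "killing_orthonormal br b \<Longrightarrow> killing br (b i) (b j) = (if i = j then 1 else 0)"
  by (simp add: killing_orthonormal_def)


lemma killing_diffL: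
  assumes LA: "lie_algebra br"
  shows "killing br (x - y) z = killing br x z - killing br y z"
  using killing_addL[OF LA, of y "x - y" z] by (simp add: algebra_simps)

lemma killing_diffR:
  assumes LA: "lie_algebra br"
  shows "killing br z (x - y) = killing br z x - killing br z y"
  using killing_addR[OF LA, of z y "x - y"] by (simp add: algebra_simps)

lemma nondeg:
  fixes br :: "('n::finite \<Rightarrow> 'k::field) \<Rightarrow> ('n \<Rightarrow> 'k) \<Rightarrow> ('n \<Rightarrow> 'k)"
  assumes LA: "lie_algebra br" and ON: "killing_orthonormal br b"
    and h: "\<And>i. killing br v (b i) = 0"
  shows "v = 0"
proof -
  interpret vs: vector_space "vscale :: 'k \<Rightarrow> ('n \<Rightarrow> 'k) \<Rightarrow> _"
    by unfold_locales (auto simp: vscale_def algebra_simps fun_eq_iff plus_fun_apply)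
  have ind: "vs.independent (range ei)"
    unfolding vs.independent_explicit_module
  proof (intro allI impI)
    fix t u v
    assume t: "finite t" "t \<subseteq> range ei" "(\<Sum>v\<in>t. vscale (u v) v) = 0" "v \<in> t"
    then obtain q where q: "v = ei q" by auto
    have "(\<Sum>w\<in>t. vscale (u w) w) q = (\<Sum>w\<in>t. u w * w q)"
      by (simp add: sum_fun_apply vscale_apply)
    also have "\<dots> = (\<Sum>w\<in>{v}. u w * w q)"
    proof (rule sum.mono_neutral_right)
      show "\<forall>i\<in>t - {v}. u i * i q = 0"
      proof
        fix w assume "w \<in> t - {v}"
        with t(2) q obtain q' where "w = ei q'" "q' \<noteq> q" by auto
        then show "u w * w q = 0" by (simp add: ei_apply)
      qed
    qed (use t in auto)
    also have "\<dots> = u v" using q by (simp add: ei_apply)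
    finally show "u v = 0" using t(3) by (simp add: zero_fun_apply)
  qed
  have sp: "vs.span (range ei) = UNIV"
  proof -
    have "w \<in> vs.span (range ei)" for w
      by (subst vec_decomp[of w]) (intro vs.span_sum vs.span_scale vs.span_base, auto)
    then show ?thesis by auto
  qed
  interpret fd: finite_dimensional_vector_space "vscale :: 'k \<Rightarrow> ('n \<Rightarrow> 'k) \<Rightarrow> _" "range ei"
    by unfold_locales (use ind sp in auto)
  define f where "f c = (\<Sum>i\<in>UNIV. vscale (c i) (b i))" for c :: "'n \<Rightarrow> 'k"
  have kf: "killing br (f c) (b j) = c j" for c j
    unfolding f_def killing_sumL[OF LA]
    using ON by (simp add: ON_eq if_distrib cong: if_cong)
  have lin: "Vector_Spaces.linear vscale vscale f"
    unfolding linear_iff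
    by (auto simp: vs.vector_space_axioms f_def vscale_def sum.distrib fun_eq_iff sum_fun_apply
        plus_fun_apply algebra_simps sum_distrib_left)
  have "inj f"
  proof (rule injI)
    fix c c' assume "f c = f c'"
    then show "c = c'" using kf by (metis ext)
  qed
  then have "surj f" using fd.linear_inj_imp_surj[OF lin] by simp
  then obtain c where c: "v = f c" by auto
  have "c = 0" using kf[of c] h c by (auto simp: fun_eq_iff zero_fun_apply)
  then show ?thesis using c by (simp add: f_def vscale_def zero_fun_def fun_eq_iff sum_fun_apply)
qed

lemma expansion:
  fixes br :: "('n::finite \<Rightarrow> 'k::field) \<Rightarrow> ('n \<Rightarrow> 'k) \<Rightarrow> ('n \<Rightarrow> 'k)"
  assumes LA: "lie_algebra br" and ON: "killing_orthonormal br b"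
  shows "v = (\<Sum>i\<in>UNIV. vscale (killing br v (b i)) (b i))"
proof -
  have "v - (\<Sum>i\<in>UNIV. vscale (killing br v (b i)) (b i)) = 0"
  proof (rule nondeg[OF LA ON])
    fix j
    show "killing br (v - (\<Sum>i\<in>UNIV. vscale (killing br v (b i)) (b i))) (b j) = 0"
      unfolding killing_diffL[OF LA] killing_sumL[OF LA]
      using ON by (simp add: ON_eq if_distrib cong: if_cong)
  qed
  then show ?thesis by simp
qed

lemma nondeg1:
  fixes br :: "('n::finite \<Rightarrow> 'k::field) \<Rightarrow> ('n \<Rightarrow> 'k) \<Rightarrow> ('n \<Rightarrow> 'k)"
  assumes LA: "lie_algebra br" and ON: "killing_orthonormal br b"
    and h: "\<And>i. killing br (b i) v = 0"
  shows "v = 0"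
  using nondeg[OF LA ON] h killing_sym[OF LA] by metis



lemma sscale_apply: "sscale c s j = vscale c (s j)"
  by (simp add: sscale_def vscale_def)

interpretation sv: vector_space "sscale :: 'k::field \<Rightarrow> (int \<Rightarrow> 'n \<Rightarrow> 'k) \<Rightarrow> _"
  by unfold_locales (auto simp: sscale_def algebra_simps fun_eq_iff plus_fun_apply)

lemma lin_span_sv: "lin_span sscale S = sv.span S"
  unfolding lin_span_def sv.span_explicit by blast

lemma laurent_subspace: "sv.subspace (laurent :: (int \<Rightarrow> 'n \<Rightarrow> 'k::field) set)"
  unfolding sv.subspace_def laurent_def
proof (intro conjI ballI allI)
  show "0 \<in> {s. \<exists>N. \<forall>j<N. s j = 0}" by (auto simp: zero_fun_apply)
next
  fix x y :: "int \<Rightarrow> 'n \<Rightarrow> 'k"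
  assume "x \<in> {s. \<exists>N. \<forall>j<N. s j = 0}" "y \<in> {s. \<exists>N. \<forall>j<N. s j = 0}"
  then obtain N M where "\<forall>j<N. x j = 0" "\<forall>j<M. y j = 0" by auto
  then show "x + y \<in> {s. \<exists>N. \<forall>j<N. s j = 0}"
    by (auto simp: plus_fun_apply intro!: exI[of _ "min N M"])
next
  fix c and x :: "int \<Rightarrow> 'n \<Rightarrow> 'k"
  assume "x \<in> {s. \<exists>N. \<forall>j<N. s j = 0}"
  then obtain N where "\<forall>j<N. x j = 0" by auto
  then show "sscale c x \<in> {s. \<exists>N. \<forall>j<N. s j = 0}"
    by (auto simp: sscale_def fun_eq_iff zero_fun_apply intro!: exI[of _ N])
qed

definition std :: "('n \<Rightarrow> ('n,'k::field) vec) \<Rightarrow> (nat \<Rightarrow> 'n \<Rightarrow> int \<Rightarrow> ('n,'k) vec) \<Rightarrow> bool" where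
  "std b F \<longleftrightarrow> (\<forall>k i j. j < 0 \<longrightarrow> F k i j = (if j = - int k - 1 then b i else 0))"

lemma std_laurent: "std b F \<Longrightarrow> F k i \<in> laurent"
  unfolding laurent_def std_def by (auto intro!: exI[of _ "- int k - 1"])

lemma span_laurent: "S \<subseteq> laurent \<Longrightarrow> sv.span S \<subseteq> laurent"
  using sv.span_minimal laurent_subspace by blast

context
  fixes br :: "('n::finite \<Rightarrow> 'k::field) \<Rightarrow> ('n \<Rightarrow> 'k) \<Rightarrow> ('n \<Rightarrow> 'k)"
  assumes LA: "lie_algebra br"
begin

lemma k0_fin:
  assumes "s \<in> laurent" "t \<in> laurent"
  shows "finite {m. killing br (s m) (t (-1-m)) \<noteq> 0}"
proof -
  obtain N M where N: "\<forall>j<N. s j = 0" and M: "\<forall>j<M. t j = 0"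
    using assms by (auto simp: laurent_def)
  have "{m. killing br (s m) (t (-1-m)) \<noteq> 0} \<subseteq> {N..-1-M}"
  proof
    fix m assume "m \<in> {m. killing br (s m) (t (-1-m)) \<noteq> 0}"
    then have h: "killing br (s m) (t (-1-m)) \<noteq> 0" by simp
    have "\<not> m < N" using h N killing_0L[OF LA] by force
    moreover have "\<not> -1 - m < M" using h M killing_0R[OF LA] by force
    ultimately show "m \<in> {N..-1-M}" by auto
  qed
  then show ?thesis using finite_subset by blast
qed

lemma k0_addR:
  assumes "s \<in> laurent" "t \<in> laurent" "t' \<in> laurent"
  shows "kappa0 br s (t + t') = kappa0 br s t + kappa0 br s t'"
  unfolding kappa0_def plus_fun_apply killing_addR[OF LA]
  by (rule Sum_any.distrib[OF k0_fin k0_fin]) (use assms in auto)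

lemma k0_scR:
  assumes "s \<in> laurent" "t \<in> laurent"
  shows "kappa0 br s (sscale c t) = c * kappa0 br s t"
  unfolding kappa0_def sscale_apply killing_scR[OF LA]
  by (rule Sum_any_right_distrib[symmetric, OF k0_fin]) (use assms in auto)

lemma k0_addL:
  assumes "s \<in> laurent" "s' \<in> laurent" "t \<in> laurent"
  shows "kappa0 br (s + s') t = kappa0 br s t + kappa0 br s' t"
  unfolding kappa0_def plus_fun_apply killing_addL[OF LA]
  by (rule Sum_any.distrib[OF k0_fin k0_fin]) (use assms in auto)

lemma k0_scL:
  assumes "s \<in> laurent" "t \<in> laurent"
  shows "kappa0 br (sscale c s) t = c * kappa0 br s t"
  unfolding kappa0_def sscale_apply killing_scL[OF LA]
  by (rule Sum_any_right_distrib[symmetric, OF k0_fin]) (use assms in auto)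

lemma k0_0R: "kappa0 br s 0 = 0"
  by (simp add: kappa0_def zero_fun_apply killing_0R[OF LA])
lemma k0_0L: "kappa0 br 0 s = 0"
  by (simp add: kappa0_def zero_fun_apply killing_0L[OF LA])

lemma k0_diffR:
  assumes "s \<in> laurent" "t \<in> laurent" "t' \<in> laurent"
  shows "kappa0 br s (t - t') = kappa0 br s t - kappa0 br s t'"
proof -
  have "t - t' \<in> laurent" using laurent_subspace assms sv.subspace_diff by blast
  then have "kappa0 br s t = kappa0 br s t' + kappa0 br s (t - t')"
    using k0_addR[OF assms(1) assms(3), of "t - t'"] by simp
  then show ?thesis by simp
qed

lemma span_orth:
  assumes A: "A \<subseteq> laurent" and C: "C \<subseteq> laurent"
    and orth: "\<And>a c. a \<in> A \<Longrightarrow> c \<in> C \<Longrightarrow> kappa0 br a c = 0"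
    and u: "u \<in> sv.span A" and z: "z \<in> sv.span C"
  shows "kappa0 br u z = 0"
proof -
  have zl: "z \<in> laurent" using span_laurent[OF C] z by blast
  have "sv.span C \<subseteq> {t \<in> laurent. kappa0 br a t = 0}" if a: "a \<in> A" for a
  proof (rule sv.span_minimal)
    show "C \<subseteq> {t \<in> laurent. kappa0 br a t = 0}" using orth a C by auto
    have al: "a \<in> laurent" using a A by auto
    show "sv.subspace {t \<in> laurent. kappa0 br a t = 0}"
      unfolding sv.subspace_def
      using laurent_subspace[unfolded sv.subspace_def] k0_addR[OF al] k0_scR[OF al] k0_0R
      by auto
  qed
  then have za: "kappa0 br a z = 0" if "a \<in> A" for a using z that by auto
  have "sv.span A \<subseteq> {s \<in> laurent. kappa0 br s z = 0}"
  proof (rule sv.span_minimal)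
    show "A \<subseteq> {s \<in> laurent. kappa0 br s z = 0}" using za A by auto
    show "sv.subspace {s \<in> laurent. kappa0 br s z = 0}"
      unfolding sv.subspace_def
      using laurent_subspace[unfolded sv.subspace_def] k0_addL[OF _ _ zl] k0_scL[OF _ zl] k0_0L
      by auto
  qed
  then show ?thesis using u by auto
qed

lemma pairing:
  assumes F: "std b F" and G: "std b G"
  shows "kappa0 br (F k i) (G l j) = killing br (b i) (G l j (int k)) + killing br (F k i (int l)) (b j)"
proof -
  let ?f = "\<lambda>m. killing br (F k i m) (G l j (-1-m))"
  have sub: "{m. ?f m \<noteq> 0} \<subseteq> {- int k - 1, int l}"
  proof
    fix m assume "m \<in> {m. ?f m \<noteq> 0}"
    then have h: "?f m \<noteq> 0" by simp
    show "m \<in> {- int k - 1, int l}"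
    proof (cases "m < 0")
      case True
      then show ?thesis using h F killing_0L[OF LA] unfolding std_def by (cases "m = - int k - 1") auto
    next
      case False
      then have "-1 - m < 0" by simp
      then have "-1 - m = - int l - 1" using h G killing_0R[OF LA] unfolding std_def by (cases "-1 - m = - int l - 1") auto
      then show ?thesis by auto
    qed
  qed
  have "kappa0 br (F k i) (G l j) = sum ?f {- int k - 1, int l}"
    unfolding kappa0_def by (rule Sum_any.expand_superset[OF _ sub]) simp
  also have "\<dots> = ?f (- int k - 1) + ?f (int l)" by simp
  also have "?f (- int k - 1) = killing br (b i) (G l j (int k))"
    using F unfolding std_def by simp
  also have "?f (int l) = killing br (F k i (int l)) (b j)"
  proof -
    have "G l j (-1 - int l) = b j" using G unfolding std_def by simp
    then show ?thesis by simp
  qed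
  finally show ?thesis .
qed

lemma pairing_ps:
  assumes F: "std b F" and p: "\<forall>j<0. p j = 0"
  shows "kappa0 br (F k i) p = killing br (b i) (p (int k))"
proof -
  let ?f = "\<lambda>m. killing br (F k i m) (p (-1-m))"
  have sub: "{m. ?f m \<noteq> 0} \<subseteq> {- int k - 1}"
  proof
    fix m assume "m \<in> {m. ?f m \<noteq> 0}"
    then have h: "?f m \<noteq> 0" by simp
    have "m < 0" using h p killing_0R[OF LA] by (cases "m < 0") auto
    then show "m \<in> {- int k - 1}"
      using h F killing_0L[OF LA] unfolding std_def by (cases "m = - int k - 1") auto
  qed
  have "kappa0 br (F k i) p = sum ?f {- int k - 1}"
    unfolding kappa0_def by (rule Sum_any.expand_superset[OF _ sub]) simp
  also have "\<dots> = killing br (b i) (p (int k))"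
    using F unfolding std_def by simp
  finally show ?thesis .
qed

lemma ps_zero:
  assumes ON: "killing_orthonormal br b" and F: "std b F" and p: "\<forall>j<0. p j = 0"
    and orth: "\<And>k i. kappa0 br (F k i) p = 0"
  shows "p = 0"
proof (rule ext)
  fix j :: int
  show "p j = 0 j"
  proof (cases "j < 0")
    case True then show ?thesis using p by (simp add: zero_fun_apply zero_fun_def)
  next
    case False
    then obtain k where k: "j = int k" by (metis nonneg_int_cases not_less)
    have "p (int k) = 0"
      by (rule nondeg1[OF LA ON]) (use orth pairing_ps[OF F p] in metis)
    then show ?thesis using k by (simp add: zero_fun_def)
  qed
qed

lemma decomp:
  assumes ON: "killing_orthonormal br b" and G: "std b G" and t: "t \<in> laurent"
  shows "\<exists>u p. u \<in> sv.span {G k i | k i. True} \<and> (\<forall>j<0. p j = 0) \<and> t = u + p"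
proof -
  have main: "\<forall>t. (\<forall>j < - int n. t j = 0) \<longrightarrow>
      (\<exists>u p. u \<in> sv.span {G k i | k i. True} \<and> (\<forall>j<0. p j = 0) \<and> t = u + p)" for n
  proof (induction n)
    case 0
    show ?case
    proof (intro allI impI)
      fix t :: "int \<Rightarrow> 'n \<Rightarrow> 'k" assume "\<forall>j < - int 0. t j = 0"
      then show "\<exists>u p. u \<in> sv.span {G k i | k i. True} \<and> (\<forall>j<0. p j = 0) \<and> t = u + p"
        by (intro exI[of _ 0] exI[of _ t]) (auto simp: sv.span_zero)
    qed
  next
    case (Suc n)
    show ?case
    proof (intro allI impI)
      fix t :: "int \<Rightarrow> 'n \<Rightarrow> 'k"
      assume tz: "\<forall>j < - int (Suc n). t j = 0"
      define j0 where "j0 = - int n - 1"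
      define w where "w = (\<Sum>i\<in>UNIV. sscale (killing br (t j0) (b i)) (G n i))"
      have wj: "w j = (\<Sum>i\<in>UNIV. vscale (killing br (t j0) (b i)) (G n i j))" for j
        unfolding w_def by (simp add: sum_fun_apply sscale_apply)
      have wspan: "w \<in> sv.span {G k i | k i. True}"
        unfolding w_def by (intro sv.span_sum sv.span_scale sv.span_base) auto
      have "\<forall>j < - int n. (t - w) j = 0"
      proof (intro allI impI)
        fix j :: int assume j: "j < - int n"
        show "(t - w) j = 0"
        proof (cases "j = j0")
          case True
          have "w j = (\<Sum>i\<in>UNIV. vscale (killing br (t j0) (b i)) (b i))"
            unfolding wj using G True unfolding std_def j0_def by simp
          also have "\<dots> = t j0" using expansion[OF LA ON, of "t j0"] by simp
          finally show ?thesis using True by simp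
        next
          case False
          then have "j < - int (Suc n)" using j unfolding j0_def by simp
          then have "t j = 0" using tz by simp
          moreover have "w j = 0" unfolding wj using G False \<open>j < - int (Suc n)\<close>
            unfolding std_def j0_def by (simp add: vscale_def zero_fun_def fun_eq_iff sum_fun_apply)
          ultimately show ?thesis by simp
        qed
      qed
      then obtain u p where up: "u \<in> sv.span {G k i | k i. True}" "\<forall>j<0. p j = 0" "t - w = u + p"
        using Suc.IH by blast
      show "\<exists>u p. u \<in> sv.span {G k i | k i. True} \<and> (\<forall>j<0. p j = 0) \<and> t = u + p"
        apply (rule exI[of _ "u + w"], rule exI[of _ p])
        using up wspan sv.span_add by (auto simp: algebra_simps)
    qed
  qed
  obtain N where N: "\<forall>j<N. t j = 0" using t by (auto simp: laurent_def)
  have "\<forall>j < - int (nat (- N)). t j = 0" using N by auto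
  then show ?thesis using main by blast
qed

end


definition kcomp :: "(('n::finite,'k::field) vec \<Rightarrow> ('n,'k) vec \<Rightarrow> ('n,'k) vec) \<Rightarrow> ('n \<Rightarrow> ('n,'k) vec)
      \<Rightarrow> ('n,'k) tens2 \<Rightarrow> 'n \<Rightarrow> ('n,'k) vec" where
  "kcomp br b T i = (\<lambda>p. \<Sum>q\<in>UNIV. T p q * killing br (ei q) (b i))"

lemma component_comp: "component br b s k i j = kcomp br b (s j k) i"
  by (simp add: component_def kcomp_def)

context
  fixes br :: "('n::finite \<Rightarrow> 'k::field) \<Rightarrow> ('n \<Rightarrow> 'k) \<Rightarrow> ('n \<Rightarrow> 'k)"
    and b :: "'n \<Rightarrow> ('n \<Rightarrow> 'k)"
  assumes LA: "lie_algebra br" and ON: "killing_orthonormal br b"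
begin

lemma kcomp_0: "kcomp br b 0 i = 0"
  by (simp add: kcomp_def zero_fun_def)

lemma comp_diff: "kcomp br b (A - B) i = kcomp br b A i - kcomp br b B i"
  by (simp add: kcomp_def fun_eq_iff algebra_simps sum_subtractf)

lemma comp_uminus: "kcomp br b (- A) i = - kcomp br b A i"
  by (simp add: kcomp_def fun_eq_iff sum_negf)

lemma comp_casimir: "kcomp br b (casimir b) i = b i"
proof (rule ext)
  fix p
  have "kcomp br b (casimir b) i p = (\<Sum>x\<in>UNIV. b x p * (\<Sum>q\<in>UNIV. b x q * killing br (ei q) (b i)))"
    unfolding kcomp_def casimir_def
    by (simp add: sum_distrib_left sum_distrib_right ac_simps) (rule sum.swap)
  also have "\<dots> = (\<Sum>x\<in>UNIV. b x p * killing br (b x) (b i))"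
    by (simp add: killing_coordL[OF LA, of "b x" "b i" for x])
  also have "\<dots> = b i p" by (simp add: ON_eq[OF ON] if_distrib cong: if_cong)
  finally show "kcomp br b (casimir b) i p = b i p" .
qed

lemma key_swap: "killing br (b i) (kcomp br b (flip2 A) j) = killing br (kcomp br b A i) (b j)"
proof -
  have "killing br (b i) (kcomp br b (flip2 A) j)
      = (\<Sum>p\<in>UNIV. (\<Sum>q\<in>UNIV. A q p * killing br (ei q) (b j)) * killing br (ei p) (b i))"
    by (subst killing_coordR[OF LA]) (simp add: kcomp_def flip2_def killing_sym[OF LA, of "b i"])
  also have "\<dots> = (\<Sum>p\<in>UNIV. \<Sum>q\<in>UNIV. A q p * killing br (ei q) (b j) * killing br (ei p) (b i))"
    by (simp add: sum_distrib_right)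
  also have "\<dots> = (\<Sum>q\<in>UNIV. \<Sum>p\<in>UNIV. A q p * killing br (ei q) (b j) * killing br (ei p) (b i))"
    by (rule sum.swap)
  also have "\<dots> = (\<Sum>q\<in>UNIV. (\<Sum>p\<in>UNIV. A q p * killing br (ei p) (b i)) * killing br (ei q) (b j))"
    by (simp add: sum_distrib_right mult.assoc mult.commute[of "killing br (ei q) (b j)" for q])
  also have "\<dots> = killing br (kcomp br b A i) (b j)"
    by (subst (2) killing_coordL[OF LA]) (simp add: kcomp_def)
  finally show ?thesis .
qed

lemma comp_inj:
  assumes h: "\<And>i. kcomp br b A i = kcomp br b B i"
  shows "A = B"
proof (intro ext)
  fix p q
  define v where "v = (\<lambda>q. A p q - B p q)"
  have "v = 0"
  proof (rule nondeg[OF LA ON])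
    fix i
    have "killing br v (b i) = kcomp br b A i p - kcomp br b B i p"
      by (subst killing_coordL[OF LA]) (simp add: v_def kcomp_def algebra_simps sum_subtractf)
    then show "killing br v (b i) = 0" using h by simp
  qed
  then show "A p q = B p q" by (simp add: v_def fun_eq_iff zero_fun_def)
qed

lemma std_r:
  assumes "normalized_standard_form b r"
  shows "std b (component br b r)"
  unfolding std_def
proof (intro allI impI)
  fix k i and j :: int assume j: "j < 0"
  then have "r j k = cauchy_kernel (casimir b) j k"
    using assms by (simp add: normalized_standard_form_def)
  then show "component br b r k i j = (if j = - int k - 1 then b i else 0)"
    by (simp add: component_comp cauchy_kernel_def comp_casimir kcomp_0)
qed

lemma std_rbar: "std b (component br b (rbar b r))"
  unfolding std_def
proof (intro allI impI)
  fix k i and j :: int assume j: "j < 0"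
  then have "rbar b r j k = cauchy_kernel (casimir b) j k"
    by (simp add: rbar_def)
  then show "component br b (rbar b r) k i j = (if j = - int k - 1 then b i else 0)"
    by (simp add: component_comp cauchy_kernel_def comp_casimir kcomp_0)
qed

lemma F1:
  assumes NS: "normalized_standard_form b r"
  shows "kappa0 br (component br b r k i) (component br b (rbar b r) l j) = 0"
proof -
  have a: "component br b (rbar b r) l j (int k) = 0 - kcomp br b (flip2 (regular_part b r l k)) j"
    by (simp add: component_comp rbar_def cauchy_kernel_def comp_uminus)
  have c: "component br b r k i (int l) = kcomp br b (regular_part b r l k) i"
    by (simp add: component_comp regular_part_def cauchy_kernel_def)
  have "kappa0 br (component br b r k i) (component br b (rbar b r) l j)
     = killing br (b i) (component br b (rbar b r) l j (int k)) + killing br (component br b r k i (int l)) (b j)"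
    by (rule pairing[OF LA std_r[OF NS] std_rbar])
  also have "\<dots> = 0"
    unfolding a c killing_diffR[OF LA] killing_0R[OF LA] key_swap by simp
  finally show ?thesis .
qed

end
theorem lemma1p19:
  fixes br :: "('n::finite \<Rightarrow> 'k::field_char_0) \<Rightarrow> ('n \<Rightarrow> 'k) \<Rightarrow> ('n \<Rightarrow> 'k)"
    and b :: "'n \<Rightarrow> ('n \<Rightarrow> 'k)"
    and r :: "int \<Rightarrow> nat \<Rightarrow> 'n \<Rightarrow> 'n \<Rightarrow> 'k"
  assumes "lie_algebra br"
    and "semisimple br"
    and "killing_orthonormal br b"
    and "normalized_formal_gen_r_matrix br b r"
  shows "kappa0_orth br (g_of br b r) = g_of br b (rbar b r)
    \<and> (skew_symmetric b r \<longleftrightarrow> kappa0_orth br (g_of br b r) = g_of br b r)"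
proof -
  have LA: "lie_algebra br" and ON: "killing_orthonormal br b" using assms by auto
  have NS: "normalized_standard_form b r"
    using assms(4) by (simp add: normalized_formal_gen_r_matrix_def)
  define Fr where "Fr = component br b r"
  define Fb where "Fb = component br b (rbar b r)"
  define S0 where "S0 = {Fr k i | k i. True}"
  define T0 where "T0 = {Fb k i | k i. True}"
  have gr: "g_of br b r = sv.span S0"
    by (simp add: g_of_def lin_span_sv S0_def Fr_def)
  have gb: "g_of br b (rbar b r) = sv.span T0"
    by (simp add: g_of_def lin_span_sv T0_def Fb_def)
  have stdr: "std b Fr" unfolding Fr_def by (rule std_r[OF LA ON NS])
  have stdb: "std b Fb" unfolding Fb_def by (rule std_rbar[OF LA ON])
  have S0L: "S0 \<subseteq> laurent" using std_laurent[OF stdr] by (auto simp: S0_def)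
  have T0L: "T0 \<subseteq> laurent" using std_laurent[OF stdb] by (auto simp: T0_def)
  have orth0: "kappa0 br a c = 0" if "a \<in> S0" "c \<in> T0" for a c
    using that F1[OF LA ON NS] by (auto simp: S0_def T0_def Fr_def Fb_def)
  have FrS: "Fr k i \<in> sv.span S0" for k i
    by (rule sv.span_base) (auto simp: S0_def)
  have killps: "p = 0" if p: "\<forall>j<0. p j = 0" and o: "\<forall>s\<in>sv.span S0. kappa0 br s p = 0" for p
    by (rule ps_zero[OF LA ON stdr p]) (use o FrS in blast)
  have P1: "kappa0_orth br (sv.span S0) = sv.span T0"
  proof
    show "sv.span T0 \<subseteq> kappa0_orth br (sv.span S0)"
    proof
      fix z assume z: "z \<in> sv.span T0"
      have "z \<in> laurent" using span_laurent[OF T0L] z by blast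
      moreover have "\<forall>s\<in>sv.span S0. kappa0 br s z = 0"
        using span_orth[OF LA S0L T0L orth0 _ z] by blast
      ultimately show "z \<in> kappa0_orth br (sv.span S0)" by (simp add: kappa0_orth_def)
    qed
  next
    show "kappa0_orth br (sv.span S0) \<subseteq> sv.span T0"
    proof
      fix v assume v: "v \<in> kappa0_orth br (sv.span S0)"
      then have vl: "v \<in> laurent" and vo: "\<forall>s\<in>sv.span S0. kappa0 br s v = 0"
        by (auto simp: kappa0_orth_def)
      obtain u p where u: "u \<in> sv.span {Fb k i | k i. True}" and p: "\<forall>j<0. p j = 0" and vup: "v = u + p"
        using decomp[OF LA ON stdb vl] by blast
      have uT: "u \<in> sv.span T0" using u by (simp add: T0_def)
      have ul: "u \<in> laurent" using span_laurent[OF T0L] uT by blast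
      have "p = 0"
      proof (rule ps_zero[OF LA ON stdr p])
        fix k i
        have "p = v - u" using vup by simp
        moreover have "kappa0 br (Fr k i) (v - u) = kappa0 br (Fr k i) v - kappa0 br (Fr k i) u"
          by (rule k0_diffR[OF LA std_laurent[OF stdr] vl ul])
        moreover have "kappa0 br (Fr k i) v = 0" using vo FrS by blast
        moreover have "kappa0 br (Fr k i) u = 0"
          by (rule span_orth[OF LA S0L T0L orth0 FrS uT])
        ultimately show "kappa0 br (Fr k i) p = 0" by simp
      qed
      then show "v \<in> sv.span T0" using vup uT by simp
    qed
  qed
  have P2: "skew_symmetric b r \<longleftrightarrow> kappa0_orth br (sv.span S0) = sv.span S0"
  proof
    assume "skew_symmetric b r"
    then have "rbar b r = r" by (simp add: skew_symmetric_def)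
    then have "T0 = S0" by (simp add: T0_def S0_def Fb_def Fr_def)
    then show "kappa0_orth br (sv.span S0) = sv.span S0" using P1 by simp
  next
    assume h: "kappa0_orth br (sv.span S0) = sv.span S0"
    have eq: "Fb k i = Fr k i" for k i
    proof -
      have FbS: "Fb k i \<in> sv.span S0"
        using P1 h sv.span_base[of "Fb k i" T0] by (auto simp: T0_def)
      have dS: "Fb k i - Fr k i \<in> sv.span S0" using sv.span_diff[OF FbS FrS] .
      have "Fb k i - Fr k i = 0"
      proof (rule killps)
        show "\<forall>j<0. (Fb k i - Fr k i) j = 0"
          using stdb stdr by (simp add: std_def)
        show "\<forall>s\<in>sv.span S0. kappa0 br s (Fb k i - Fr k i) = 0"
          using dS h by (auto simp: kappa0_orth_def)
      qed
      then show ?thesis by simp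
    qed
    have "rbar b r j k = r j k" for j k
    proof (rule comp_inj[OF LA ON])
      fix i
      show "kcomp br b (rbar b r j k) i = kcomp br b (r j k) i"
        using eq[of k i] unfolding Fb_def Fr_def by (metis component_comp)
    qed
    then show "skew_symmetric b r" by (simp add: skew_symmetric_def fun_eq_iff)
  qed
  show ?thesis using P1 P2 gr gb by simp
qed


end
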